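(* Let $n\in\mathbf{N}$, $b\in\mathbf{N}$ and $\ell\in\mathbf{N}$. There exists $C>0$ such that $\|m^1_{b,\ell,L}(\cdot,t)\|_{L^2(\mathbf{R}^n_\xi)}\le Ct^{2(b-1)}e^{-t/2}+Ct^{-\frac n4-\ell}$ for all $t\ge1$.
   Context: Expressions $\cos(t\sqrt z)$ denote the entire function $\sum_m(-1)^mt^{2m}z^m/(2m)!$ of $z\in\mathbf{R}$ (equal to $\cosh(t\sqrt{-z})$ for $z<0$). For $r\ge0$, $c\in\mathbf{R}$, $a\in[0,1]$ with $4ar^2<1$, $t>0$: $f(r,c,t)=\cos(t\sqrt{r^2-c})$, $g(r,a,t)=\exp(-\frac{2tr^2}{1+\sqrt{1-4ar^2}})$. For $\xi\neq0$: $W^1_b(\xi,t)=\sum_{k=0}^{b-1}(\frac14)^k\frac1{k!}\partial_c^kf(|\xi|,0,t)$, $D^1_\ell(\xi,t)=\frac12\sum_{k=0}^{\ell-1}\frac1{k!}\partial_a^kg(|\xi|,0,t)$. Let $\chi_L$ be a smooth function on $[0,\infty)$ with $\chi_L(r)=0$ for $r\ge\frac13$ and $\chi_L(r)=1$ for $r\le\frac14$. Define $m^1_{b,\ell,L}(\xi,t)=\chi_L(|\xi|)\big[e^{-t/2}\cos(t\sqrt{|\xi|^2-\frac14})-e^{-t/2}W^1_b(\xi,t)-D^1_\ell(\xi,t)\big]$. *)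

theory Defs
  imports "HOL-Analysis.Analysis"
begin

text \<open>The entire function cos(t sqrt z) = sum_m (-1)^m t^(2m) z^m / (2m)!.\<close>
definition cos_sqrt :: "real \<Rightarrow> real \<Rightarrow> real" where
  "cos_sqrt t z = (\<Sum>m. (-1)^m * t^(2*m) * z^m / fact (2*m))"

definition f_fun :: "real \<Rightarrow> real \<Rightarrow> real \<Rightarrow> real" where
  "f_fun r c t = cos_sqrt t (r^2 - c)"

definition g_fun :: "real \<Rightarrow> real \<Rightarrow> real \<Rightarrow> real" where
  "g_fun r a t = exp (- (2 * t * r^2) / (1 + sqrt (1 - 4 * a * r^2)))"

definition W1 :: "nat \<Rightarrow> real \<Rightarrow> real \<Rightarrow> real" where
  "W1 b r t = (\<Sum>k<b. (1/4)^k * (1 / fact k) * (deriv ^^ k) (\<lambda>c. f_fun r c t) 0)"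

definition D1 :: "nat \<Rightarrow> real \<Rightarrow> real \<Rightarrow> real" where
  "D1 l r t = 1/2 * (\<Sum>k<l. (1 / fact k) * (deriv ^^ k) (\<lambda>a. g_fun r a t) 0)"

definition m1 :: "(real \<Rightarrow> real) \<Rightarrow> nat \<Rightarrow> nat \<Rightarrow> 'a::real_normed_vector \<Rightarrow> real \<Rightarrow> real" where
  "m1 chiL b l xi t = chiL (norm xi) *
     (exp (- t / 2) * cos_sqrt t ((norm xi)^2 - 1/4)
      - exp (- t / 2) * W1 b (norm xi) t - D1 l (norm xi) t)"

end

theory Submission
  imports Defs "HOL-Complex_Analysis.Complex_Analysis" "HOL-Real_Asymp.Real_Asymp"
begin


definition ca :: "nat \<Rightarrow> nat \<Rightarrow> real" where
  "ca k m = (-1)^(m+k) * fact (m+k) / (fact m * fact (2*(m+k)))"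
definition yk :: "nat \<Rightarrow> real \<Rightarrow> real" where
  "yk k w = (\<Sum>m. ca k m * w^m)"

lemma ca_abs: "\<bar>ca k m\<bar> \<le> 1 / fact m"
proof -
  have "fact (m+k) \<le> (fact (2*(m+k)) :: real)" by (intro fact_mono) auto
  then show ?thesis unfolding ca_def
    by (simp add: abs_mult field_simps)
qed

lemma ca_summable: "summable (\<lambda>m. ca k m * w^m)"
proof (rule summable_comparison_test[OF _ summable_exp[of "\<bar>w\<bar>"]])
  show "\<exists>N. \<forall>n\<ge>N. norm (ca k n * w ^ n) \<le> inverse (fact n) * \<bar>w\<bar> ^ n"
  proof (intro exI allI impI)
    fix n
    have "norm (ca k n * w ^ n) = \<bar>ca k n\<bar> * \<bar>w\<bar>^n" by (simp add: abs_mult power_abs)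
    also have "\<dots> \<le> 1 / fact n * \<bar>w\<bar>^n" by (intro mult_right_mono ca_abs) auto
    finally show "norm (ca k n * w ^ n) \<le> inverse (fact n) * \<bar>w\<bar> ^ n" by (simp add: divide_simps)
  qed
qed

lemma diffs_ca: "diffs (ca k) = ca (Suc k)"
proof
  fix m
  have "diffs (ca k) m = of_nat (Suc m) * ca k (Suc m)" by (simp add: diffs_def)
  also have "\<dots> = ca (Suc k) m"
  proof -
    have e1: "Suc m + k = Suc (m+k)" "m + Suc k = Suc (m+k)" by auto
    have "fact (Suc m) = (real (Suc m)) * fact m" by simp
    then show ?thesis unfolding ca_def e1
      by (simp del: fact_Suc of_nat_Suc)
  qed
  finally show "diffs (ca k) m = ca (Suc k) m" .
qed

lemma yk_deriv: "(yk k has_real_derivative yk (Suc k) w) (at w)"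
proof -
  have "((\<lambda>x. \<Sum>n. ca k n * x^n) has_field_derivative (\<Sum>n. diffs (ca k) n * w^n)) (at w)"
    by (rule termdiffs_strong_converges_everywhere) (rule ca_summable)
  then show ?thesis unfolding yk_def diffs_ca by (simp add: fun_eq_iff)
qed

lemma yk_zero: "yk k 0 = ca k 0"
  unfolding yk_def by (rule powser_zero)

lemma ca_rec0: "(4*real k+2) * ca (Suc k) 0 + ca k 0 = 0"
proof -
  have a: "fact (Suc k) = real (Suc k) * fact k" by simp
  have b: "fact (2 * Suc k) = real (Suc (Suc (2*k))) * (real (Suc (2*k)) * fact (2*k))"
    by (simp add: algebra_simps)
  show ?thesis unfolding ca_def using a b
    by (simp del: fact_Suc of_nat_Suc add: field_simps) (simp add: algebra_simps)
qed

lemma ca_recS: "4 * ca (Suc (Suc k)) m + (4*real k+2) * ca (Suc k) (Suc m) + ca k (Suc m) = 0"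
proof -
  define N where "N = m + k"
  define A where "A = (fact (Suc N) :: real)"
  define B where "B = (fact (2 * Suc N) :: real)"
  define C where "C = (fact m :: real)"
  define s where "s = ((-1::real)^N)"
  have pos: "A > 0" "B > 0" "C > 0" by (auto simp: A_def B_def C_def)
  have i1: "m + Suc (Suc k) = Suc (Suc N)" "Suc m + Suc k = Suc (Suc N)" "Suc m + k = Suc N"
    by (auto simp: N_def)
  have f1: "fact (Suc (Suc N)) = (real N + 2) * A" by (simp add: A_def)
  have f2: "fact (2 * Suc (Suc N)) = (2 * real N + 4) * ((2 * real N + 3) * B)"
  proof -
    have "2 * Suc (Suc N) = Suc (Suc (2 * Suc N))" by simp
    then have "fact (2 * Suc (Suc N)) = (real (Suc (Suc (2 * Suc N)))) * ((real (Suc (2 * Suc N))) * (fact (2 * Suc N) :: real))"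
      by (simp only: fact_Suc of_nat_mult)
    then show ?thesis by (simp add: B_def algebra_simps)
  qed
  have f3: "fact (Suc m) = (real m + 1) * C" by (simp add: C_def)
  have e1: "ca (Suc (Suc k)) m = s * (real N + 2) * A / (C * ((2 * real N + 4) * ((2 * real N + 3) * B)))"
    unfolding ca_def i1 f1 f2 by (simp add: s_def C_def)
  have e2: "ca (Suc k) (Suc m) = s * (real N + 2) * A / ((real m + 1) * C * ((2 * real N + 4) * ((2 * real N + 3) * B)))"
    unfolding ca_def i1 f1 f2 f3 by (simp add: s_def)
  have e3: "ca k (Suc m) = - s * A / ((real m + 1) * C * B)"
    unfolding ca_def i1 f3 by (simp add: s_def A_def B_def)
  have N: "real N = real m + real k" by (simp add: N_def)
  have nz: "real m + 1 \<noteq> 0" "2 * real N + 3 \<noteq> 0" "2 * real N + 4 \<noteq> 0" "real N + 2 \<noteq> 0"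
    "A \<noteq> 0" "B \<noteq> 0" "C \<noteq> 0" using pos by auto
  define P where "P = 2 * C * (2 * real N + 3) * B"
  have Pnz: "P \<noteq> 0" using nz by (simp add: P_def)
  have e1': "ca (Suc (Suc k)) m = s * A / P"
    unfolding e1 P_def by (subst frac_eq_eq, use nz in simp, use nz in simp, simp add: algebra_simps)
  have e2': "ca (Suc k) (Suc m) = s * A / ((real m + 1) * P)"
    unfolding e2 P_def by (subst frac_eq_eq, use nz in simp, use nz in simp, simp add: algebra_simps)
  have e3': "ca k (Suc m) = - s * A * (2 * (2 * real N + 3)) / ((real m + 1) * P)"
    unfolding e3 P_def by (subst frac_eq_eq, use nz in simp, use nz in simp, simp add: algebra_simps)
  define q where "q = real m + 1"
  have qnz: "q \<noteq> 0" by (simp add: q_def)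
  define u where "u = s * A / (q * P)"
  have g1: "ca (Suc (Suc k)) m = u * (real m + 1)" unfolding e1' u_def q_def[symmetric]
    using qnz Pnz by (simp add: field_simps)
  have g2: "ca (Suc k) (Suc m) = u" unfolding e2' u_def q_def ..
  have g3: "ca k (Suc m) = - u * (2 * (2 * real N + 3))" unfolding e3' u_def q_def[symmetric]
    using qnz Pnz by (simp add: field_simps)
  have "4 * ca (Suc (Suc k)) m + (4*real k+2) * ca (Suc k) (Suc m) + ca k (Suc m)
      = u * (4 * (real m + 1) + (4 * real k + 2) - 2 * (2 * real N + 3))"
    unfolding g1 g2 g3 by (simp add: algebra_simps)
  also have "\<dots> = 0" by (simp add: N)
  finally show ?thesis .
qed

lemma yk_ode: "4 * w * yk (Suc (Suc k)) w + (4*real k+2) * yk (Suc k) w + yk k w = 0"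
proof -
  define F where "F m = (if m = 0 then 0 else ca (Suc (Suc k)) (m - 1) * w^m)" for m
  have "(\<lambda>m. ca (Suc (Suc k)) m * w^m) sums yk (Suc (Suc k)) w"
    unfolding yk_def using ca_summable by (rule summable_sums)
  then have "(\<lambda>m. w * (ca (Suc (Suc k)) m * w^m)) sums (w * yk (Suc (Suc k)) w)"
    by (rule sums_mult)
  then have "(\<lambda>m. F (Suc m)) sums (w * yk (Suc (Suc k)) w)"
    by (simp add: F_def algebra_simps)
  then have sF: "F sums (w * yk (Suc (Suc k)) w)" using sums_Suc[of F] by (simp add: F_def)
  have s1: "(\<lambda>m. ca (Suc k) m * w^m) sums yk (Suc k) w"
    unfolding yk_def using ca_summable by (rule summable_sums)
  have s0: "(\<lambda>m. ca k m * w^m) sums yk k w"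
    unfolding yk_def using ca_summable by (rule summable_sums)
  have "(\<lambda>m. 4 * F m + (4*real k+2) * (ca (Suc k) m * w^m) + ca k m * w^m) sums
        (4 * (w * yk (Suc (Suc k)) w) + (4*real k+2) * yk (Suc k) w + yk k w)"
    by (intro sums_add sums_mult sF s1 s0)
  moreover have "(\<lambda>m. 4 * F m + (4*real k+2) * (ca (Suc k) m * w^m) + ca k m * w^m) = (\<lambda>m. 0)"
  proof
    fix m show "4 * F m + (4*real k+2) * (ca (Suc k) m * w^m) + ca k m * w^m = 0"
    proof (cases m)
      case 0 then show ?thesis using ca_rec0[of k] by (simp add: F_def)
    next
      case (Suc m')
      have "4 * F m + (4*real k+2) * (ca (Suc k) m * w^m) + ca k m * w^m
          = (4 * ca (Suc (Suc k)) m' + (4*real k+2) * ca (Suc k) (Suc m') + ca k (Suc m')) * w^m"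
        using Suc by (simp add: F_def algebra_simps)
      then show ?thesis using ca_recS[of k m'] by simp
    qed
  qed
  ultimately have "(\<lambda>m. 0::real) sums (4 * (w * yk (Suc (Suc k)) w) + (4*real k+2) * yk (Suc k) w + yk k w)"
    by simp
  then have "4 * (w * yk (Suc (Suc k)) w) + (4*real k+2) * yk (Suc k) w + yk k w = 0"
    using sums_unique2 sums_zero by blast
  then show ?thesis by (simp add: mult.assoc)
qed

lemma yk_bound:
  assumes "w \<ge> 0" shows "\<bar>yk k w\<bar> \<le> 1"
proof -
  define E where "E x = (yk k x)^2 + 4 * x * (yk (Suc k) x)^2" for x
  have dE: "(E has_real_derivative (- 8 * real k * (yk (Suc k) x)^2)) (at x)" for x
  proof -
    have "(E has_real_derivative (2 * yk k x * yk (Suc k) x + (4 * (yk (Suc k) x)^2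
        + 4 * x * (2 * yk (Suc k) x * yk (Suc (Suc k)) x)))) (at x)"
      unfolding E_def
      by (rule derivative_eq_intros yk_deriv refl | simp)+
    moreover have "2 * yk k x * yk (Suc k) x + (4 * (yk (Suc k) x)^2
        + 4 * x * (2 * yk (Suc k) x * yk (Suc (Suc k)) x)) = - 8 * real k * (yk (Suc k) x)^2"
    proof -
      have o: "4 * x * yk (Suc (Suc k)) x = - (4*real k+2) * yk (Suc k) x - yk k x"
        using yk_ode[of x k] by linarith
      have "2 * yk k x * yk (Suc k) x + (4 * (yk (Suc k) x)^2
        + 4 * x * (2 * yk (Suc k) x * yk (Suc (Suc k)) x))
        = 2 * yk k x * yk (Suc k) x + (4 * (yk (Suc k) x)^2
        + 2 * yk (Suc k) x * (4 * x * yk (Suc (Suc k)) x))" by (simp add: algebra_simps)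
      also have "\<dots> = - 8 * real k * (yk (Suc k) x)^2" unfolding o by (simp add: algebra_simps power2_eq_square)
      finally show ?thesis .
    qed
    ultimately show ?thesis by simp
  qed
  have "E w \<le> E 0"
    by (rule DERIV_nonpos_imp_nonincreasing[OF assms]) (use dE in \<open>auto intro!: exI\<close>)
  moreover have "E 0 = (ca k 0)^2" by (simp add: E_def yk_zero)
  moreover have "(yk k w)^2 \<le> E w" using assms by (simp add: E_def)
  moreover have "\<bar>ca k 0\<bar> \<le> 1" using ca_abs[of k 0] by simp
  ultimately have "(yk k w)^2 \<le> 1"
    using abs_square_le_1[of "ca k 0"] by linarith
  then show ?thesis using abs_square_le_1 by blast
qed


lemma cos_sqrt_yk: "cos_sqrt t z = yk 0 (t^2 * z)"
  unfolding cos_sqrt_def yk_def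
proof (intro suminf_cong)
  fix m
  have "ca 0 m = (-1)^m / fact (2*m)" unfolding ca_def by simp
  moreover have "t^(2*m) = (t^2)^m" by (simp add: power_mult)
  ultimately show "(-1)^m * t^(2*m) * z^m / fact (2*m) = ca 0 m * (t\<^sup>2 * z)^m"
    by (simp add: power_mult_distrib)
qed

lemma deriv_f_fun: "(deriv ^^ k) (\<lambda>c. f_fun r c t) = (\<lambda>c. (-(t^2))^k * yk k (t^2 * (r^2 - c)))"
proof (induction k)
  case 0 then show ?case by (simp add: f_fun_def cos_sqrt_yk)
next
  case (Suc k)
  have "deriv (\<lambda>c. (-(t^2))^k * yk k (t^2 * (r^2 - c))) c = (-(t^2))^Suc k * yk (Suc k) (t^2 * (r^2 - c))" for c
  proof (rule DERIV_imp_deriv)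
    have i: "((\<lambda>c. t^2 * (r^2 - c)) has_real_derivative (- (t^2))) (at c)"
      by (auto intro!: derivative_eq_intros)
    have "((\<lambda>c. (-(t^2))^k * yk k (t^2 * (r^2 - c))) has_real_derivative
      (-(t^2))^k * (yk (Suc k) (t^2 * (r^2 - c)) * (- (t^2)))) (at c)"
      by (rule DERIV_cmult DERIV_chain2[OF yk_deriv i])+
    then show "((\<lambda>c. (-(t^2))^k * yk k (t^2 * (r^2 - c))) has_real_derivative
      (-(t^2))^Suc k * yk (Suc k) (t^2 * (r^2 - c))) (at c)"
      by (simp add: algebra_simps)
  qed
  then have dd: "deriv (\<lambda>c. (-(t^2))^k * yk k (t^2 * (r^2 - c))) = (\<lambda>c. (-(t^2))^Suc k * yk (Suc k) (t^2 * (r^2 - c)))"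
    by (rule ext)
  show ?case unfolding funpow.simps(2) o_apply Suc.IH dd ..
qed

lemma W1_eq: "W1 b r t = (\<Sum>k<b. (1/4)^k * (1 / fact k) * ((-(t^2))^k * yk k (t^2 * r^2)))"
  unfolding W1_def deriv_f_fun by simp

lemma W1_bound:
  assumes t: "t \<ge> 1"
  shows "\<bar>W1 b r t\<bar> \<le> real b * t powr (2 * (real b - 1))"
proof -
  have "\<bar>W1 b r t\<bar> \<le> (\<Sum>k<b. \<bar>(1/4)^k * (1 / fact k) * ((-(t^2))^k * yk k (t^2 * r^2))\<bar>)"
    unfolding W1_eq by (rule sum_abs)
  also have "\<dots> \<le> (\<Sum>k<b. t powr (2 * (real b - 1)))"
  proof (rule sum_mono)
    fix k assume k: "k \<in> {..<b}"
    have y: "\<bar>yk k (t^2 * r^2)\<bar> \<le> 1" by (rule yk_bound) simp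
    have f: "(1/4::real)^k * (1 / fact k) \<le> 1"
    proof -
      have "(1/4::real)^k \<le> 1" by (simp add: power_le_one)
      moreover have "1 / fact k \<le> (1::real)" by simp
      ultimately show ?thesis by (intro mult_le_one) auto
    qed
    have "\<bar>(1/4)^k * (1 / fact k) * ((-(t^2))^k * yk k (t^2 * r^2))\<bar>
        = ((1/4::real)^k * (1 / fact k)) * (t^(2*k) * \<bar>yk k (t^2 * r^2)\<bar>)"
      by (simp add: abs_mult power_abs power_mult)
    also have "\<dots> \<le> 1 * (t^(2*k) * 1)"
      using f y t by (intro mult_mono) auto
    also have "t^(2*k) = t powr (real (2*k))" using t by (intro powr_realpow[symmetric]) auto
    also have "\<dots> \<le> t powr (2 * (real b - 1))"
      using k t by (intro powr_mono) auto
    finally show "\<bar>(1/4)^k * (1 / fact k) * ((-(t^2))^k * yk k (t^2 * r^2))\<bar> \<le> t powr (2 * (real b - 1))"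
      by simp
  qed
  also have "\<dots> = real b * t powr (2 * (real b - 1))" by simp
  finally show ?thesis .
qed

lemma cosh_series: fixes x :: real shows "(\<lambda>m. x^(2*m) / fact (2*m)) sums ((exp x + exp (-x)) / 2)"
proof -
  define f where "f n = (x^n + (-x)^n) / (fact n * 2)" for n
  have "(\<lambda>n. (x^n /\<^sub>R fact n + (-x)^n /\<^sub>R fact n) / 2) sums ((exp x + exp (-x)) / 2)"
    by (intro sums_divide sums_add exp_converges)
  then have fs: "f sums ((exp x + exp (-x)) / 2)"
    by (simp add: f_def[abs_def] field_simps)
  have "(\<lambda>n. f (2*n)) sums ((exp x + exp (-x)) / 2)"
  proof (subst sums_mono_reindex)
    show "strict_mono (\<lambda>n::nat. 2*n)" by (simp add: strict_mono_def)
    show "f n = 0" if "n \<notin> range (\<lambda>n::nat. 2*n)" for n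
    proof -
      have "odd n" using that by (metis evenE rangeI)
      then show ?thesis by (simp add: f_def)
    qed
  qed (rule fs)
  then show ?thesis by (simp add: f_def power_mult)
qed

lemma main_term:
  assumes r: "r\<^sup>2 < 1/4"
  shows "exp (-t/2) * cos_sqrt t (r^2 - 1/4)
     = 1/2 * g_fun r 1 t + 1/2 * exp (-t/2 - t * sqrt (1/4 - r^2))"
proof -
  define \<sigma> where "\<sigma> = sqrt (1/4 - r^2)"
  have \<sigma>: "\<sigma> \<ge> 0" "\<sigma>^2 = 1/4 - r^2" using r by (auto simp: \<sigma>_def)
  define x where "x = t * \<sigma>"
  have "cos_sqrt t (r^2 - 1/4) = (\<Sum>m. x^(2*m) / fact (2*m))"
    unfolding cos_sqrt_def x_def
  proof (intro suminf_cong)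
    fix m
    have h1: "(-1::real)^m * (r\<^sup>2 - 1/4)^m = (\<sigma>^2)^m"
      using \<sigma> by (simp flip: power_mult_distrib)
    have h2: "(t * \<sigma>)^(2*m) = (t^2)^m * (\<sigma>^2)^m"
      by (simp add: power_mult power_mult_distrib)
    have h3: "t^(2*m) = (t^2)^m" by (simp add: power_mult)
    have "(-1)^m * t^(2*m) * (r\<^sup>2 - 1/4)^m = ((-1::real)^m * (r\<^sup>2 - 1/4)^m) * t^(2*m)"
      by (simp only: mult_ac)
    also have "\<dots> = (t * \<sigma>)^(2*m)" unfolding h1 h2 h3 by (simp only: mult_ac)
    finally show "(-1)^m * t^(2*m) * (r\<^sup>2 - 1/4)^m / fact (2*m) = (t * \<sigma>)^(2*m) / fact (2*m)"
      by simp
  qed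
  also have "\<dots> = (exp x + exp (-x)) / 2" using cosh_series by (rule sums_unique[symmetric])
  finally have c: "cos_sqrt t (r^2 - 1/4) = (exp x + exp (-x)) / 2" .
  have s2: "sqrt (1 - 4 * 1 * r^2) = 2 * \<sigma>"
  proof -
    have "1 - 4 * 1 * r^2 = (2*\<sigma>)^2" using \<sigma> by (simp add: power_mult_distrib)
    then show ?thesis using \<sigma> by (intro real_sqrt_unique) auto
  qed
  have tt: "\<sigma> * (\<sigma> * (t * 4)) + r * (r * (t * 4)) = t"
  proof -
    have "\<sigma> * (\<sigma> * (t * 4)) + r * (r * (t * 4)) = t * (4 * \<sigma>^2 + 4 * r^2)" by (simp add: algebra_simps power2_eq_square)
    also have "4 * \<sigma>^2 + 4 * r^2 = 1" using \<sigma> by simp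
    finally show ?thesis by simp
  qed
  have e: "-t/2 + x = - (2 * t * r^2) / (1 + sqrt (1 - 4 * 1 * r^2))"
    unfolding s2 x_def using \<sigma> tt by (simp add: field_simps power2_eq_square)
  have "exp (-t/2) * cos_sqrt t (r^2 - 1/4) = 1/2 * exp (-t/2 + x) + 1/2 * exp (-t/2 - x)"
  proof -
    have "exp (-t/2 + x) = exp (-t/2) * exp x" by (rule exp_add)
    moreover have "exp (-t/2 - x) = exp (-t/2) * exp (-x)" by (simp add: exp_add[symmetric])
    ultimately show ?thesis unfolding c by (simp add: algebra_simps)
  qed
  moreover have g: "g_fun r 1 t = exp (-t/2 + x)" unfolding g_fun_def e ..
  ultimately have "exp (-t/2) * cos_sqrt t (r^2 - 1/4) = 1/2 * g_fun r 1 t + 1/2 * exp (-t/2 - x)"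
    by simp
  then show ?thesis unfolding x_def \<sigma>_def .
qed


definition Hc :: "real \<Rightarrow> real \<Rightarrow> complex \<Rightarrow> complex" where
  "Hc r t z = exp (- (of_real (2*t*r^2)) / (1 + csqrt (1 - 4 * z * of_real (r^2))))"
definition Ur :: "real \<Rightarrow> complex set" where
  "Ur r = {z. 4 * r^2 * Re z < 1}"

lemma open_Ur: "open (Ur r)"
  unfolding Ur_def by (intro open_Collect_less continuous_intros)

lemma Ur_Re: "z \<in> Ur r \<Longrightarrow> 0 < Re (1 - 4 * z * of_real (r^2))"
  unfolding Ur_def by (simp add: mult_ac)

lemma csqrt_denom_nz: "1 + csqrt w \<noteq> 0"
proof
  assume h: "1 + csqrt w = 0"
  have "Re (1 + csqrt w) = 0" using h by simp
  moreover have "Re (1 + csqrt w) = 1 + Re (csqrt w)" by simp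
  ultimately show False using Re_csqrt[of w] by linarith
qed

lemma Hc_holo: "Hc r t holomorphic_on Ur r"
proof -
  have "(\<lambda>z. exp (- (of_real (2*t*r^2)) / (1 + csqrt (1 - 4 * z * of_real (r^2))))) holomorphic_on Ur r"
  proof (intro holomorphic_intros)
    fix z assume "z \<in> Ur r"
    then have "0 < Re (1 - 4 * z * of_real (r^2))" by (rule Ur_Re)
    show "1 - 4 * z * of_real (r^2) \<notin> \<real>\<^sub>\<le>\<^sub>0"
    proof
      assume "1 - 4 * z * of_real (r^2) \<in> \<real>\<^sub>\<le>\<^sub>0"
      then obtain q where q: "1 - 4 * z * of_real (r^2) = of_real q" "q \<le> 0"
        by (auto simp: nonpos_Reals_def)
      have "Re (1 - 4 * z * of_real (r^2)) = q" unfolding q(1) by simp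
      with q(2) \<open>0 < Re (1 - 4 * z * of_real (r^2))\<close> show False by linarith
    qed
  next
    fix z show "1 + csqrt (1 - 4 * z * of_real (r^2)) \<noteq> 0" by (rule csqrt_denom_nz)
  qed
  then show ?thesis unfolding Hc_def[abs_def] .
qed

lemma Hc_real: "4 * a * r^2 < 1 \<Longrightarrow> Hc r t (of_real a) = of_real (g_fun r a t)"
proof -
  assume a: "4 * a * r^2 < 1"
  have "1 - 4 * of_real a * of_real (r^2) = (of_real (1 - 4*a*r^2) :: complex)" by simp
  moreover have "csqrt (of_real (1 - 4*a*r^2)) = of_real (sqrt (1 - 4*a*r^2))"
    using a by (subst csqrt_of_real_nonneg) auto
  ultimately show ?thesis unfolding Hc_def g_fun_def
    by (simp add: exp_of_real[symmetric] del: of_real_diff)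
qed

lemma Re_comp_deriv:
  assumes "G holomorphic_on U" "open U" "of_real x \<in> U"
  shows "((\<lambda>y. Re (G (of_real y))) has_real_derivative Re (deriv G (of_real x))) (at x)"
proof -
  have "(G has_field_derivative deriv G (of_real x)) (at (of_real x))"
    using assms by (intro holomorphic_derivI)
  then have "((\<lambda>y. G (of_real y)) has_vector_derivative deriv G (of_real x)) (at x)"
    by (rule has_vector_derivative_real_field)
  then have "((\<lambda>y. Re (G (of_real y))) has_vector_derivative Re (deriv G (of_real x))) (at x)"
    by (rule bounded_linear.has_vector_derivative[OF bounded_linear_Re])
  then show ?thesis by (simp add: has_real_derivative_iff_has_vector_derivative)
qed

lemma deriv_real_complex:
  fixes F :: "complex \<Rightarrow> complex" and f :: "real \<Rightarrow> real"
  assumes F: "F holomorphic_on U" "open U" and S: "open S" "\<And>x. x \<in> S \<Longrightarrow> of_real x \<in> U"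
    and fF: "\<And>x. x \<in> S \<Longrightarrow> f x = Re (F (of_real x))"
  shows "x \<in> S \<Longrightarrow> (deriv ^^ k) f x = Re ((deriv ^^ k) F (of_real x))"
proof (induction k arbitrary: x)
  case 0 then show ?case using fF by simp
next
  case (Suc k)
  have ev: "eventually (\<lambda>y. (deriv ^^ k) f y = Re ((deriv ^^ k) F (of_real y))) (nhds x)"
    using Suc.IH eventually_nhds S(1) Suc.prems by blast
  have "(deriv ^^ Suc k) f x = deriv ((deriv ^^ k) f) x" by simp
  also have "\<dots> = deriv (\<lambda>y. Re ((deriv ^^ k) F (of_real y))) x"
    by (rule deriv_cong_ev[OF ev refl])
  also have "\<dots> = Re (deriv ((deriv ^^ k) F) (of_real x))"
    by (rule DERIV_imp_deriv, rule Re_comp_deriv[OF holomorphic_higher_deriv[OF F] F(2)])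
       (use S Suc.prems in auto)
  also have "\<dots> = Re ((deriv ^^ Suc k) F (of_real x))" by simp
  finally show ?case .
qed

lemma deriv_real_complex_has:
  fixes F :: "complex \<Rightarrow> complex" and f :: "real \<Rightarrow> real"
  assumes F: "F holomorphic_on U" "open U" and S: "open S" "\<And>x. x \<in> S \<Longrightarrow> of_real x \<in> U"
    and fF: "\<And>x. x \<in> S \<Longrightarrow> f x = Re (F (of_real x))"
    and x: "x \<in> S"
  shows "((deriv ^^ k) f has_real_derivative (deriv ^^ Suc k) f x) (at x)"
proof -
  have "((\<lambda>y. Re ((deriv ^^ k) F (of_real y))) has_real_derivative Re (deriv ((deriv ^^ k) F) (of_real x))) (at x)"
    by (rule Re_comp_deriv[OF holomorphic_higher_deriv[OF F] F(2)]) (use S x in auto)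
  then have "((deriv ^^ k) f has_real_derivative Re (deriv ((deriv ^^ k) F) (of_real x))) (at x)"
    by (rule has_field_derivative_transform_within_open[OF _ S(1) x])
       (use deriv_real_complex[OF F S fF] in auto)
  moreover have "Re (deriv ((deriv ^^ k) F) (of_real x)) = (deriv ^^ Suc k) f x"
    using deriv_real_complex[OF F S fF x, of "Suc k"] by simp
  ultimately show ?thesis by simp
qed

lemma g_deriv_Re:
  assumes "4 * a * r^2 < 1"
  shows "(deriv ^^ k) (\<lambda>a. g_fun r a t) a = Re ((deriv ^^ k) (Hc r t) (of_real a))"
proof (rule deriv_real_complex[OF Hc_holo open_Ur])
  show "open {a. 4 * a * r^2 < 1}" by (intro open_Collect_less continuous_intros)
  show "of_real x \<in> Ur r" if "x \<in> {a. 4 * a * r^2 < 1}" for x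
    using that by (simp add: Ur_def mult_ac)
  show "g_fun r x t = Re (Hc r t (of_real x))" if "x \<in> {a. 4 * a * r^2 < 1}" for x
    using that Hc_real by simp
qed (use assms in simp)

lemma g_deriv_has:
  assumes "4 * a * r^2 < 1"
  shows "((deriv ^^ k) (\<lambda>a. g_fun r a t) has_real_derivative (deriv ^^ Suc k) (\<lambda>a. g_fun r a t) a) (at a)"
proof (rule deriv_real_complex_has[OF Hc_holo open_Ur])
  show "open {a. 4 * a * r^2 < 1}" by (intro open_Collect_less continuous_intros)
  show "of_real x \<in> Ur r" if "x \<in> {a. 4 * a * r^2 < 1}" for x
    using that by (simp add: Ur_def mult_ac)
  show "g_fun r x t = Re (Hc r t (of_real x))" if "x \<in> {a. 4 * a * r^2 < 1}" for x
    using that Hc_real by simp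
qed (use assms in simp)


lemma Hc_bound:
  assumes r: "0 < r" "r \<le> 1/3" and t: "t \<ge> 0" and z: "norm z \<le> 2 / (9 * r^2)"
  shows "norm (Hc r t z) \<le> exp (- t * r^2 / 2)"
proof -
  define w where "w = 1 - 4 * z * of_real (r^2)"
  define s where "s = csqrt w"
  have "norm (4 * z * of_real (r^2)) = 4 * r^2 * norm z" by (simp add: norm_mult norm_power)
  also have "\<dots> \<le> 4 * r^2 * (2 / (9 * r^2))" using z r by (intro mult_left_mono) auto
  also have "\<dots> = 8/9" using r by (simp add: field_simps)
  finally have "norm (4 * z * of_real (r^2)) \<le> 8/9" .
  then have nw: "norm w \<le> 17/9" unfolding w_def
    using norm_triangle_ineq4[of 1 "4 * z * of_real (r^2)"] by simp
  have ns: "(norm s)^2 \<le> 17/9" unfolding s_def using nw by simp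
  have Rs: "Re s \<ge> 0" unfolding s_def by (rule Re_csqrt)
  have ns2: "(norm s)^2 = (Re s)^2 + (Im s)^2" by (rule cmod_power2)
  define D where "D = (cmod (1 + s))^2"
  have D: "D = 1 + 2 * Re s + (norm s)^2" unfolding D_def cmod_power2 ns2 by (simp add: power2_eq_square algebra_simps)
  have Dpos: "D > 0" using D Rs by (smt (verit) zero_le_power2)
  have key0: "D \<le> 1 + 2 * Re s + 17/9" unfolding D using ns by (rule add_left_mono)
  have key: "4 * (1 + Re s) \<ge> D" using key0 Rs by simp
  define c where "c = 2 * t * r^2"
  have c: "c \<ge> 0" using t by (simp add: c_def)
  have "Re (- (of_real c) / (1 + s)) = - c * (1 + Re s) / D"
    by (simp add: Re_divide D_def cmod_power2)
  also have "\<dots> \<le> - c / 4"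
  proof -
    have "c / 4 * D \<le> c / 4 * (4 * (1 + Re s))" using key c by (intro mult_left_mono) auto
    then have "c / 4 * D \<le> c * (1 + Re s)" by (simp add: algebra_simps)
    then have "c / 4 \<le> c * (1 + Re s) / D" using Dpos by (simp add: pos_le_divide_eq)
    then show ?thesis by simp
  qed
  finally have "Re (- (of_real c) / (1 + s)) \<le> - t * r^2 / 2" by (simp add: c_def)
  then have "exp (Re (- (of_real c) / (1 + s))) \<le> exp (- t * r^2 / 2)" by simp
  moreover have "norm (Hc r t z) = exp (Re (- (of_real c) / (1 + s)))"
    unfolding Hc_def s_def w_def c_def by (simp add: norm_exp_eq_Re)
  ultimately show ?thesis by simp
qed


lemma g_taylor_bound_pos:
  assumes r: "0 < r" "r \<le> 1/3" and t: "t \<ge> 0"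
  shows "\<bar>g_fun r 1 t - (\<Sum>k<l. (deriv ^^ k) (\<lambda>a. g_fun r a t) 0 / fact k)\<bar>
          \<le> 2 * exp (- t * r^2 / 2) * (9 * r^2 / 2)^l"
proof -
  define F where "F = Hc r t"
  define \<rho> where "\<rho> = 1 / (4 * r^2)"
  define R where "R = 2 / (9 * r^2)"
  define B where "B = exp (- t * r^2 / 2)"
  have r2: "r^2 \<le> 1/9" using power_mono[of r "1/3" 2] r by (simp add: power_divide)
  have r2p: "r^2 > 0" using r by simp
  have R2: "R \<ge> 2" unfolding R_def using r2 r2p by (simp add: field_simps)
  have Rrho: "R < \<rho>" unfolding R_def \<rho>_def using r2p by (simp add: field_simps)
  have ballU: "ball 0 \<rho> \<subseteq> Ur r"
  proof
    fix z :: complex assume "z \<in> ball 0 \<rho>"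
    then have "Re z < \<rho>" using complex_Re_le_cmod[of z] by simp
    then have "4 * r^2 * Re z < 4 * r^2 * \<rho>" using r2p by simp
    then show "z \<in> Ur r" unfolding Ur_def \<rho>_def using r2p by simp
  qed
  have holo: "F holomorphic_on ball 0 \<rho>"
    unfolding F_def by (rule holomorphic_on_subset[OF Hc_holo ballU])
  have one: "(1::complex) \<in> ball 0 \<rho>" unfolding \<rho>_def using r2 r2p by (simp add: field_simps)
  define c where "c n = (deriv ^^ n) F 0 / fact n" for n
  have "(\<lambda>n. (deriv ^^ n) F 0 / fact n * (1 - 0)^n) sums F 1"
    by (rule holomorphic_power_series[OF holo one])
  then have cs: "c sums F 1" by (simp add: c_def[abs_def])
  then have tail: "(\<lambda>n. c (n + l)) sums (F 1 - (\<Sum>k<l. c k))"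
    by (simp add: sums_iff_shift)
  have F1: "F 1 = of_real (g_fun r 1 t)"
    unfolding F_def using Hc_real[of 1 r t] r2 by simp
  have Rec: "Re (c k) = (deriv ^^ k) (\<lambda>a. g_fun r a t) 0 / fact k" for k
  proof -
    have "(deriv ^^ k) (\<lambda>a. g_fun r a t) 0 = Re ((deriv ^^ k) (Hc r t) (of_real 0))"
      by (rule g_deriv_Re) simp
    then show ?thesis unfolding c_def F_def by (simp add: Re_divide_of_real[where r = "fact k", simplified])
  qed
  have diff: "g_fun r 1 t - (\<Sum>k<l. (deriv ^^ k) (\<lambda>a. g_fun r a t) 0 / fact k) = Re (F 1 - (\<Sum>k<l. c k))"
    by (simp add: F1 Rec)
  have cb: "norm (c n) \<le> B * (1/R)^n" for n
  proof -
    have "cball 0 R \<subseteq> ball (0::complex) \<rho>" using Rrho by (auto simp: subset_iff)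
    then have cU: "cball 0 R \<subseteq> Ur r" using ballU by (rule order.trans)
    have "norm ((deriv ^^ n) F 0) \<le> fact n * B / R^n"
    proof (rule Cauchy_inequality)
      show "F holomorphic_on ball 0 R" using holo by (rule holomorphic_on_subset) (use Rrho in \<open>auto simp: subset_iff\<close>)
      show "continuous_on (cball 0 R) F" unfolding F_def
        by (rule holomorphic_on_imp_continuous_on, rule holomorphic_on_subset[OF Hc_holo cU])
      show "0 < R" using R2 by simp
      show "norm (F x) \<le> B" if "norm (0 - x) = R" for x
        unfolding F_def B_def by (rule Hc_bound[OF r t]) (use that in \<open>simp add: R_def\<close>)
    qed
    then show ?thesis unfolding c_def by (simp add: norm_divide field_simps power_divide)
  qed
  have gsum: "summable (\<lambda>n. B * (1/R)^(n + l))"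
    using R2 by (intro summable_mult summable_geometric_iff[THEN iffD2] summable_ignore_initial_segment) auto
  have sumn: "summable (\<lambda>n. norm (c (n + l)))"
    by (rule summable_comparison_test'[OF gsum]) (use cb in simp)
  have "norm (F 1 - (\<Sum>k<l. c k)) = norm (\<Sum>n. c (n + l))" using tail sums_unique by metis
  also have "\<dots> \<le> (\<Sum>n. norm (c (n + l)))" by (rule summable_norm[OF sumn])
  also have "\<dots> \<le> (\<Sum>n. B * (1/R)^(n + l))" by (rule suminf_le) (use cb sumn gsum in auto)
  also have "\<dots> = B * (1/R)^l * (\<Sum>n. (1/R)^n)"
  proof -
    have "(\<lambda>n. B * (1/R)^(n + l)) = (\<lambda>n. (B * (1/R)^l) * (1/R)^n)"
      by (simp add: power_add mult_ac)
    moreover have "summable (\<lambda>n. (1/R)^n)" using R2 by (intro summable_geometric) simp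
    ultimately show ?thesis by (simp add: suminf_mult)
  qed
  also have "(\<Sum>n. (1/R)^n) = 1 / (1 - 1/R)" using R2 by (intro suminf_geometric) simp
  also have "B * (1/R)^l * (1 / (1 - 1/R)) \<le> B * (1/R)^l * 2"
  proof (rule mult_left_mono)
    show "1 / (1 - 1/R) \<le> 2" using R2 by (simp add: field_simps)
    show "0 \<le> B * (1/R)^l" using R2 by (simp add: B_def)
  qed
  also have "(1/R) = 9 * r^2 / 2" by (simp add: R_def)
  finally have "norm (F 1 - (\<Sum>k<l. c k)) \<le> 2 * B * (9 * r^2 / 2)^l" by simp
  then show ?thesis unfolding diff B_def using abs_Re_le_cmod order.trans by blast
qed


lemma deriv_const_fun: "deriv (\<lambda>_. c :: real) = (\<lambda>_. 0)"
  by (rule ext, rule DERIV_imp_deriv) simp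

lemma funpow_deriv_const: "(deriv ^^ Suc k) (\<lambda>_. c :: real) = (\<lambda>_. 0)"
  by (induction k) (simp_all add: deriv_const_fun)

lemma D1_bound:
  assumes r: "0 \<le> r" "r \<le> 1/3" and t: "t \<ge> 0"
  shows "\<bar>1/2 * g_fun r 1 t - D1 l r t\<bar> \<le> exp (- t * r^2 / 2) * (9 * r^2 / 2)^l"
proof (cases "r = 0")
  case True
  have g: "(\<lambda>a. g_fun r a t) = (\<lambda>_. 1)" by (simp add: g_fun_def True)
  have dk: "(deriv ^^ k) (\<lambda>a. g_fun r a t) 0 = (if k = 0 then 1 else 0)" for k
    unfolding g by (cases k) (simp_all only: funpow_deriv_const, simp_all)
  have "D1 l r t = (if l = 0 then 0 else 1/2)"
    unfolding D1_def dk by (cases l) (simp_all add: lessThan_Suc_eq_insert_0 sum.reindex)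
  moreover have "g_fun r 1 t = 1" by (simp add: g_fun_def True)
  ultimately show ?thesis using True by (cases l) auto
next
  case False
  then have rp: "0 < r" using r by simp
  have e: "1/2 * g_fun r 1 t - D1 l r t = 1/2 * (g_fun r 1 t - (\<Sum>k<l. (deriv ^^ k) (\<lambda>a. g_fun r a t) 0 / fact k))"
    unfolding D1_def by (simp add: algebra_simps)
  show ?thesis unfolding e using g_taylor_bound_pos[OF rp r(2) t, of l] by (simp add: abs_mult)
qed

lemma exp_ge_pow: "x \<ge> 0 \<Longrightarrow> x^n / fact n \<le> exp (x::real)"
proof -
  assume x: "x \<ge> 0"
  have "(\<Sum>i\<in>{n}. x^i /\<^sub>R fact i) \<le> (\<Sum>i. x^i /\<^sub>R fact i)"
    by (rule sum_le_suminf) (use x summable_exp_generic[of x] in auto)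
  also have "\<dots> = exp x" by (simp add: exp_def)
  finally show ?thesis by (simp add: divide_inverse mult.commute)
qed

lemma D1_bound_t:
  assumes r: "0 \<le> r" "r \<le> 1/3" and t: "t > 0"
  shows "\<bar>1/2 * g_fun r 1 t - D1 l r t\<bar> \<le> 18^l * fact l * t powr (- real l) * exp (- t * r^2 / 4)"
proof -
  define u where "u = t * r^2"
  have u: "u \<ge> 0" using t by (simp add: u_def)
  have "(u/4)^l / fact l \<le> exp (u/4)" using u by (intro exp_ge_pow) simp
  then have uu: "u^l \<le> 4^l * fact l * exp (u/4)" by (simp add: field_simps power_divide)
  have "(9 * r^2 / 2)^l = (9/2)^l * u^l * t powr (- real l)"
    using t by (simp add: u_def power_mult_distrib powr_minus powr_realpow field_simps power_divide)
  then have "exp (- t * r^2 / 2) * (9 * r^2 / 2)^l = (9/2)^l * t powr (- real l) * (u^l * exp (- u / 2))"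
    by (simp add: u_def mult_ac)
  also have "\<dots> \<le> (9/2)^l * t powr (- real l) * (4^l * fact l * exp (u/4) * exp (- u / 2))"
    by (intro mult_left_mono mult_right_mono uu) auto
  also have "(9/2)^l * t powr (- real l) * (4^l * fact l * exp (u/4) * exp (- u / 2)) = 18^l * fact l * t powr (- real l) * exp (- t * r^2 / 4)"
  proof -
    have "exp (u/4) * exp (- u / 2) = exp (- t * r^2 / 4)" by (simp add: exp_add[symmetric] u_def)
    moreover have "(9/2::real)^l * 4^l = 18^l" by (simp add: power_mult_distrib[symmetric])
    moreover have "(9/2)^l * t powr (- real l) * (4^l * fact l * exp (u/4) * exp (- u / 2))
       = ((9/2::real)^l * 4^l) * fact l * t powr (- real l) * (exp (u/4) * exp (- u / 2))"
      by (simp only: mult_ac)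
    ultimately show ?thesis by simp
  qed
  finally show ?thesis using D1_bound[OF r less_imp_le[OF t], of l] by linarith
qed


lemma meas_g: "(\<lambda>r. g_fun r a t) \<in> borel_measurable borel"
  unfolding g_fun_def by measurable

lemma meas_gderiv:
  assumes "\<bar>a\<bar> < 1"
  shows "(\<lambda>r. indicator {r. \<bar>r\<bar> < 1/2} r * (deriv ^^ k) (\<lambda>a. g_fun r a t) a) \<in> borel_measurable borel"
  using assms
proof (induction k arbitrary: a)
  case 0 then show ?case using meas_g by simp
next
  case (Suc k)
  define I where "I b r = indicator {r. \<bar>r\<bar> < 1/2} r * (deriv ^^ k) (\<lambda>a. g_fun r a t) b" for b r
  define h where "h n = (1 - \<bar>a\<bar>) / (real n + 2)" for n
  have hpos: "h n > 0" for n using Suc.prems by (simp add: h_def)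
  have hle: "h n < 1 - \<bar>a\<bar>" for n
  proof -
    have "\<bar>a\<bar> * (1 + real n) < 1 * (1 + real n)" using Suc.prems by (intro mult_strict_right_mono) auto
    then have "\<bar>a\<bar> + \<bar>a\<bar> * real n < 1 + real n" by (simp add: algebra_simps)
    then show ?thesis using Suc.prems by (simp add: h_def field_simps)
  qed
  have hlim: "h \<longlonglongrightarrow> 0"
  proof -
    have "(\<lambda>n. (1 - \<bar>a\<bar>) * inverse (real n + 2)) \<longlonglongrightarrow> (1 - \<bar>a\<bar>) * 0"
      by (intro tendsto_mult tendsto_const) real_asymp
    then show ?thesis by (simp add: h_def[abs_def] divide_inverse)
  qed
  have hat: "filterlim h (at 0) sequentially"
    by (rule filterlim_atI[OF hlim]) (use hpos in \<open>auto intro!: always_eventually simp: less_imp_neq[symmetric]\<close>)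
  define u where "u n r = (I (a + h n) r - I a r) / h n" for n r
  have um: "u n \<in> borel_measurable borel" for n
  proof -
    have "\<bar>a + h n\<bar> < 1" using hpos[of n] hle[of n] by linarith
    then have "I (a + h n) \<in> borel_measurable borel" "I a \<in> borel_measurable borel"
      using Suc.IH Suc.prems unfolding I_def[abs_def] by auto
    then show ?thesis unfolding u_def[abs_def] by measurable
  qed
  show ?case
  proof (rule borel_measurable_LIMSEQ_real[OF _ um])
    fix r :: real
    show "(\<lambda>n. u n r) \<longlonglongrightarrow> indicator {r. \<bar>r\<bar> < 1/2} r * (deriv ^^ Suc k) (\<lambda>a. g_fun r a t) a"
    proof (cases "\<bar>r\<bar> < 1/2")
      case False then show ?thesis by (simp add: u_def I_def)
    next
      case True
      have "r^2 < 1/4"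
      proof -
        have "\<bar>r\<bar>^2 < (1/2)^2" using True by (intro power_strict_mono) auto
        then show ?thesis by (simp add: power2_abs power_divide)
      qed
      moreover have "a * r^2 \<le> \<bar>a\<bar> * r^2" by (intro mult_right_mono) auto
      moreover have "\<bar>a\<bar> * r^2 \<le> 1 * r^2" using Suc.prems by (intro mult_right_mono) auto
      ultimately have ar: "4 * a * r^2 < 1" by linarith
      have "((deriv ^^ k) (\<lambda>a. g_fun r a t) has_real_derivative (deriv ^^ Suc k) (\<lambda>a. g_fun r a t) a) (at a)"
        by (rule g_deriv_has[OF ar])
      then have "((\<lambda>x. ((deriv ^^ k) (\<lambda>a. g_fun r a t) (a + x) - (deriv ^^ k) (\<lambda>a. g_fun r a t) a) / x)
          \<longlongrightarrow> (deriv ^^ Suc k) (\<lambda>a. g_fun r a t) a) (at 0)"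
        by (simp add: DERIV_def)
      from filterlim_compose[OF this hat]
      show ?thesis using True by (simp add: u_def I_def)
    qed
  qed
qed

lemma meas_D1: "(\<lambda>r. indicator {r. \<bar>r\<bar> < 1/2} r * D1 l r t) \<in> borel_measurable borel"
proof -
  have "(\<lambda>r. indicator {r. \<bar>r\<bar> < 1/2} r * D1 l r t) =
      (\<lambda>r. 1/2 * (\<Sum>k<l. (1 / fact k) * (indicator {r. \<bar>r\<bar> < 1/2} r * (deriv ^^ k) (\<lambda>a. g_fun r a t) 0)))"
    by (rule ext) (simp add: D1_def sum_distrib_left mult_ac)
  moreover have "(\<lambda>r. 1/2 * (\<Sum>k<l. (1 / fact k) * (indicator {r. \<bar>r\<bar> < 1/2} r * (deriv ^^ k) (\<lambda>a. g_fun r a t) 0))) \<in> borel_measurable borel"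
    using meas_gderiv[of 0] by measurable
  ultimately show ?thesis by simp
qed


lemma pow_le_exp_bound: "(x::real) \<ge> 0 \<Longrightarrow> x^n \<le> 2^n * fact n * exp (x/2)"
proof -
  assume x: "x \<ge> 0"
  have "(x/2)^n / fact n \<le> exp (x/2)" using x by (intro exp_ge_pow) simp
  then show ?thesis by (simp add: field_simps power_divide)
qed

definition S0 :: "nat \<Rightarrow> real" where
  "S0 d = exp 1 * 2^d * fact d / (1 - exp (-1/2))"

lemma gauss_sum_bound:
  assumes t: "t \<ge> 1"
  shows "(\<Sum>j<J. exp (- (real j ^ 2) / 2) * ((real j+1)/sqrt t)^d) \<le> S0 d * t powr (-(real d)/2)"
proof -
  define q where "q = exp (-1/2::real)"
  have q: "0 < q" "q < 1" by (auto simp: q_def)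
  have tm: "exp (- (real j ^ 2) / 2) * (real j+1)^d \<le> exp 1 * 2^d * fact d * q^j" for j
  proof -
    have "exp (- (real j ^ 2) / 2) \<le> exp (1/2 - real j)"
    proof -
      have "(real j - 1)^2 \<ge> 0" by simp
      then have "- (real j ^ 2) / 2 \<le> 1/2 - real j" by (simp add: power2_eq_square algebra_simps)
      then show ?thesis by simp
    qed
    moreover have "(real j+1)^d \<le> 2^d * fact d * exp ((real j+1)/2)" by (rule pow_le_exp_bound) simp
    ultimately have "exp (- (real j ^ 2) / 2) * (real j+1)^d \<le> exp (1/2 - real j) * (2^d * fact d * exp ((real j+1)/2))"
      by (intro mult_mono) auto
    also have "exp (1/2 - real j) * (2^d * fact d * exp ((real j+1)/2)) = 2^d * fact d * (exp (1/2 - real j) * exp ((real j+1)/2))"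
      by (simp only: mult_ac)
    also have "exp (1/2 - real j) * exp ((real j+1)/2) = exp 1 * q^j"
    proof -
      have "exp (1/2 - real j) * exp ((real j+1)/2) = exp (1 + real j * (-1/2))" by (simp add: exp_add[symmetric] field_simps)
      also have "\<dots> = exp 1 * q^j" unfolding exp_add exp_of_nat_mult q_def by simp
      finally show ?thesis .
    qed
    finally show ?thesis by (simp only: mult_ac)
  qed
  have tp: "((real j+1)/sqrt t)^d = (real j+1)^d * t powr (-(real d)/2)" for j
  proof -
    have "(sqrt t)^d = (t powr (1/2))^d" using t powr_half_sqrt[of t] by simp
    also have "\<dots> = t powr (real d / 2)" using t by (subst powr_power) (simp_all add: mult.commute)
    finally have st: "(sqrt t)^d = t powr (real d / 2)" .
    have "((real j+1)/sqrt t)^d = (real j+1)^d / (sqrt t)^d" by (rule power_divide)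
    also have "\<dots> = (real j+1)^d * inverse (t powr (real d / 2))" unfolding st by (simp only: divide_inverse)
    also have "inverse (t powr (real d / 2)) = t powr (-(real d)/2)"
    proof -
      have e: "-(real d)/2 = -(real d / 2)" by simp
      show ?thesis by (simp only: e powr_minus)
    qed
    finally show ?thesis .
  qed
  have "(\<Sum>j<J. exp (- (real j ^ 2) / 2) * ((real j+1)/sqrt t)^d)
      = (\<Sum>j<J. exp (- (real j ^ 2) / 2) * (real j+1)^d) * t powr (-(real d)/2)"
    by (simp only: tp sum_distrib_right mult.assoc)
  also have "(\<Sum>j<J. exp (- (real j ^ 2) / 2) * (real j+1)^d) \<le> (\<Sum>j<J. exp 1 * 2^d * fact d * q^j)"
    by (intro sum_mono tm)
  also have "\<dots> = exp 1 * 2^d * fact d * (\<Sum>j<J. q^j)" by (simp add: sum_distrib_left)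
  also have "(\<Sum>j<J. q^j) \<le> (\<Sum>j. q^j)"
    by (rule sum_le_suminf) (use q in \<open>auto intro: summable_geometric\<close>)
  also have "(\<Sum>j. q^j) = 1 / (1 - q)" using q by (intro suminf_geometric) simp
  finally have "(\<Sum>j<J. exp (- (real j ^ 2) / 2) * ((real j+1)/sqrt t)^d) \<le> exp 1 * 2^d * fact d * (1 / (1 - q)) * t powr (-(real d)/2)"
    by (simp add: mult_right_mono)
  then show ?thesis by (simp add: S0_def q_def)
qed


lemma gauss_pointwise:
  fixes \<xi> :: "'a::euclidean_space"
  assumes t: "t \<ge> 1" and x: "norm \<xi> \<le> 1/3"
  shows "exp (- t * (norm \<xi>)^2 / 2) \<le> (\<Sum>j<nat \<lceil>sqrt t\<rceil>. exp (- (real j ^ 2) / 2) * indicator (ball 0 ((real j+1)/sqrt t)) \<xi>)"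
proof -
  define s where "s = sqrt t * norm \<xi>"
  have s0: "s \<ge> 0" using t by (simp add: s_def)
  define j0 where "j0 = nat \<lfloor>s\<rfloor>"
  have j0a: "real j0 \<le> s" using s0 by (simp add: j0_def)
  have j0b: "s < real j0 + 1" using s0 by (simp add: j0_def)
  have st: "sqrt t \<ge> 1" using t by simp
  have "s \<le> sqrt t * (1/3)" unfolding s_def using x t by (intro mult_left_mono) auto
  also have "\<dots> < sqrt t" using st by simp
  also have "sqrt t \<le> real (nat \<lceil>sqrt t\<rceil>)" by linarith
  finally have "real j0 < real (nat \<lceil>sqrt t\<rceil>)" using j0a by linarith
  then have jJ: "j0 \<in> {..<nat \<lceil>sqrt t\<rceil>}" by simp
  have "norm \<xi> < (real j0 + 1) / sqrt t" using j0b st by (simp add: s_def field_simps)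
  then have inb: "\<xi> \<in> ball 0 ((real j0+1)/sqrt t)" by simp
  have "(real j0)^2 \<le> s^2" using j0a by (intro power_mono) auto
  also have "s^2 = t * (norm \<xi>)^2" using t by (simp add: s_def power_mult_distrib)
  finally have "- t * (norm \<xi>)^2 / 2 \<le> - (real j0 ^ 2) / 2" by simp
  then have "exp (- t * (norm \<xi>)^2 / 2) \<le> exp (- (real j0 ^ 2) / 2) * indicator (ball 0 ((real j0+1)/sqrt t)) \<xi>"
    using inb by simp
  also have "\<dots> \<le> (\<Sum>j<nat \<lceil>sqrt t\<rceil>. exp (- (real j ^ 2) / 2) * indicator (ball 0 ((real j+1)/sqrt t)) \<xi>)"
    by (rule member_le_sum[OF jJ]) auto
  finally show ?thesis .
qed

lemma gauss_integral:
  fixes \<rho> :: "nat \<Rightarrow> real" and w :: "nat \<Rightarrow> real"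
  assumes "\<And>j. \<rho> j \<ge> 0"
  shows "integrable lborel (\<lambda>\<xi>::'a::euclidean_space. \<Sum>j<J. w j * indicator (ball 0 (\<rho> j)) \<xi>)"
    and "integral\<^sup>L lborel (\<lambda>\<xi>::'a::euclidean_space. \<Sum>j<J. w j * indicator (ball 0 (\<rho> j)) \<xi>)
          = (\<Sum>j<J. w j * (\<rho> j ^ DIM('a) * measure lborel (ball (0::'a) 1)))"
proof -
  have ii: "integrable lborel (\<lambda>\<xi>::'a. w j * indicator (ball 0 (\<rho> j)) \<xi>)" for j
    by (intro integrable_mult_right integrable_real_indicator emeasure_bounded_finite) auto
  show "integrable lborel (\<lambda>\<xi>::'a::euclidean_space. \<Sum>j<J. w j * indicator (ball 0 (\<rho> j)) \<xi>)"
    by (rule Bochner_Integration.integrable_sum, rule ii)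
  have "integral\<^sup>L lborel (\<lambda>\<xi>::'a::euclidean_space. \<Sum>j<J. w j * indicator (ball 0 (\<rho> j)) \<xi>)
      = (\<Sum>j<J. integral\<^sup>L lborel (\<lambda>\<xi>::'a. w j * indicator (ball 0 (\<rho> j)) \<xi>))"
    by (rule Bochner_Integration.integral_sum) (rule ii)
  also have "\<dots> = (\<Sum>j<J. w j * (\<rho> j ^ DIM('a) * measure lborel (ball (0::'a) 1)))"
  proof (rule sum.cong[OF refl])
    fix j
    have "integral\<^sup>L lborel (\<lambda>\<xi>::'a. w j * indicator (ball 0 (\<rho> j)) \<xi>) = w j * measure lborel (ball (0::'a) (\<rho> j))"
      by simp
    also have "measure lborel (ball (0::'a) (\<rho> j)) = \<rho> j ^ DIM('a) * measure lborel (ball (0::'a) 1)"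
      by (rule content_ball_conv_unit_ball) (rule assms)
    finally show "integral\<^sup>L lborel (\<lambda>\<xi>::'a. w j * indicator (ball 0 (\<rho> j)) \<xi>) = w j * (\<rho> j ^ DIM('a) * measure lborel (ball (0::'a) 1))" .
  qed
  finally show "integral\<^sup>L lborel (\<lambda>\<xi>::'a::euclidean_space. \<Sum>j<J. w j * indicator (ball 0 (\<rho> j)) \<xi>)
          = (\<Sum>j<J. w j * (\<rho> j ^ DIM('a) * measure lborel (ball (0::'a) 1)))" .
qed


lemma m1_pointwise:
  fixes \<xi> :: "'a::real_normed_vector"
  assumes t: "t \<ge> 1"
    and vanish: "\<And>r. r \<ge> 1/3 \<Longrightarrow> chiL r = 0"
    and M: "\<And>r. 0 \<le> r \<Longrightarrow> r \<le> 1/3 \<Longrightarrow> \<bar>chiL r\<bar> \<le> M"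
  shows "\<bar>m1 chiL b l \<xi> t\<bar> \<le> indicator (cball 0 (1/3)) \<xi> *
      (M * (exp (-t/2)/2 + exp (-t/2) * (real b * t powr (2 * (real b - 1))))
       + M * (18^l * fact l * t powr (- real l)) * exp (- t * (norm \<xi>)^2 / 4))"
proof (cases "norm \<xi> \<le> 1/3")
  case False
  then have "chiL (norm \<xi>) = 0" using vanish by simp
  then show ?thesis using False by (simp add: m1_def)
next
  case True
  define r where "r = norm \<xi>"
  have r: "0 \<le> r" "r \<le> 1/3" using True by (auto simp: r_def)
  have r2: "r^2 < 1/4"
  proof -
    have "r^2 \<le> (1/3)^2" using r by (intro power_mono) auto
    then show ?thesis by (simp add: power_divide)
  qed
  have Mpos: "M \<ge> 0" using M[OF r] by linarith
  define E where "E = exp (-t/2 - t * sqrt (1/4 - r^2))"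
  have E: "0 \<le> E" "E \<le> exp (-t/2)" using t r2 by (auto simp: E_def)
  have eq: "m1 chiL b l \<xi> t = chiL r * ((1/2 * g_fun r 1 t - D1 l r t) + 1/2 * E - exp (-t/2) * W1 b r t)"
    unfolding m1_def r_def[symmetric] main_term[OF r2] E_def by (simp add: algebra_simps)
  have b1: "\<bar>1/2 * g_fun r 1 t - D1 l r t\<bar> \<le> 18^l * fact l * t powr (- real l) * exp (- t * r^2 / 4)"
    using D1_bound_t[OF r, of t l] t by simp
  have b2: "\<bar>exp (-t/2) * W1 b r t\<bar> \<le> exp (-t/2) * (real b * t powr (2 * (real b - 1)))"
    using W1_bound[OF t, of b r] by (simp add: abs_mult)
  have "\<bar>(1/2 * g_fun r 1 t - D1 l r t) + 1/2 * E - exp (-t/2) * W1 b r t\<bar>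
      \<le> \<bar>1/2 * g_fun r 1 t - D1 l r t\<bar> + 1/2 * E + \<bar>exp (-t/2) * W1 b r t\<bar>"
    using E by linarith
  also have "\<dots> \<le> (exp (-t/2)/2 + exp (-t/2) * (real b * t powr (2 * (real b - 1))))
       + (18^l * fact l * t powr (- real l)) * exp (- t * r^2 / 4)"
    using b1 b2 E by linarith
  finally have in1: "\<bar>(1/2 * g_fun r 1 t - D1 l r t) + 1/2 * E - exp (-t/2) * W1 b r t\<bar>
     \<le> (exp (-t/2)/2 + exp (-t/2) * (real b * t powr (2 * (real b - 1))))
       + (18^l * fact l * t powr (- real l)) * exp (- t * r^2 / 4)" .
  have "\<bar>m1 chiL b l \<xi> t\<bar> = \<bar>chiL r\<bar> * \<bar>(1/2 * g_fun r 1 t - D1 l r t) + 1/2 * E - exp (-t/2) * W1 b r t\<bar>"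
    unfolding eq by (simp add: abs_mult)
  also have "\<dots> \<le> M * ((exp (-t/2)/2 + exp (-t/2) * (real b * t powr (2 * (real b - 1))))
       + (18^l * fact l * t powr (- real l)) * exp (- t * r^2 / 4))"
    using Mpos by (intro mult_mono M[OF r] in1) auto
  finally show ?thesis using True by (simp add: r_def distrib_left mult.assoc)
qed

lemma yk_meas: "yk k \<in> borel_measurable borel"
proof (rule borel_measurable_continuous_onI)
  show "continuous_on UNIV (yk k)"
    by (rule continuous_at_imp_continuous_on) (use DERIV_isCont[OF yk_deriv] in blast)
qed

lemma m1_meas:
  fixes chiL :: "real \<Rightarrow> real"
  assumes cont: "continuous_on {0..} chiL"
    and vanish: "\<And>r. r \<ge> 1/3 \<Longrightarrow> chiL r = 0"
  shows "(\<lambda>\<xi>::'a::euclidean_space. m1 chiL b l \<xi> t) \<in> borel_measurable borel"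
proof -
  define I where "I r = (indicator {r::real. \<bar>r\<bar> < 1/2} r :: real)" for r :: real
  define \<Phi> where "\<Phi> r = I r * (exp (-t/2) * yk 0 (t^2 * (r^2 - 1/4)))
      - exp (-t/2) * (\<Sum>k<b. (1/4)^k * (1 / fact k) * ((-(t^2))^k * (I r * yk k (t^2 * r^2))))
      - I r * D1 l r t" for r
  have yk0: "yk k \<in> borel_measurable borel" for k by (rule yk_meas)
  have d1: "(\<lambda>r. I r * D1 l r t) \<in> borel_measurable borel" unfolding I_def by (rule meas_D1)
  have Im: "I \<in> borel_measurable borel" unfolding I_def[abs_def] by measurable
  have \<Phi>m: "\<Phi> \<in> borel_measurable borel"
    unfolding \<Phi>_def[abs_def] using yk0 d1 Im by measurable
  have cn: "continuous_on UNIV (\<lambda>\<xi>::'a. chiL (norm \<xi>))"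
    by (rule continuous_on_compose2[OF cont continuous_on_norm_id]) auto
  have cm: "(\<lambda>\<xi>::'a. chiL (norm \<xi>)) \<in> borel_measurable borel"
    by (rule borel_measurable_continuous_onI[OF cn])
  have eq: "m1 chiL b l \<xi> t = chiL (norm \<xi>) * \<Phi> (norm \<xi>)" for \<xi> :: 'a
  proof (cases "norm \<xi> < 1/2")
    case True
    then show ?thesis unfolding m1_def \<Phi>_def I_def W1_eq cos_sqrt_yk
      by (simp add: algebra_simps sum_distrib_left)
  next
    case False
    then have "chiL (norm \<xi>) = 0" using vanish by simp
    then show ?thesis by (simp add: m1_def)
  qed
  show ?thesis unfolding eq using cm \<Phi>m by measurable
qed


lemma exp_half_bound:
  assumes t: "t \<ge> 1"
  shows "exp (-t/2) / 2 \<le> (fact (n + l) * 2^(n+l) / 2) * t powr (- real n / 4 - real l)"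
proof -
  define N where "N = n + l"
  have "(t/2)^N / fact N \<le> exp (t/2)" using t by (intro exp_ge_pow) simp
  then have "t^N \<le> fact N * 2^N * exp (t/2)" by (simp add: field_simps power_divide)
  then have "exp (-t/2) \<le> fact N * 2^N * inverse (t^N)"
    using t by (simp add: exp_minus field_simps)
  also have "inverse (t^N) = t powr (- real N)" using t by (simp add: powr_minus powr_realpow)
  also have "t powr (- real N) \<le> t powr (- real n / 4 - real l)"
    using t by (intro powr_mono) (auto simp: N_def)
  finally have "exp (-t/2) \<le> fact N * 2^N * t powr (- real n / 4 - real l)"
    by (simp add: mult_left_mono)
  then show ?thesis by (simp add: N_def)
qed

theorem proposition3:
  fixes chiL :: "real \<Rightarrow> real" and b l :: nat
  assumes smooth: "\<exists>D :: nat \<Rightarrow> real \<Rightarrow> real. D 0 = chiL \<and>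
            (\<forall>k x. x \<ge> 0 \<longrightarrow> (D k has_real_derivative D (Suc k) x) (at x within {0..}))"
    and vanish: "\<And>r. r \<ge> 1/3 \<Longrightarrow> chiL r = 0"
    and one: "\<And>r. 0 \<le> r \<Longrightarrow> r \<le> 1/4 \<Longrightarrow> chiL r = 1"
  shows "\<exists>C > 0. \<forall>t \<ge> 1.
           integrable lborel (\<lambda>xi :: real ^ 'n. (m1 chiL b l xi t)^2) \<and>
           sqrt (integral\<^sup>L lborel (\<lambda>xi :: real ^ 'n. (m1 chiL b l xi t)^2))
             \<le> C * t powr (2 * (real b - 1)) * exp (- t / 2)
               + C * t powr (- real CARD('n) / 4 - real l)"
proof -
  obtain D where D0: "D 0 = chiL"
    and Dd: "\<And>k x. x \<ge> 0 \<Longrightarrow> (D k has_real_derivative D (Suc k) x) (at x within {0..})"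
    using smooth by blast
  have cont: "continuous_on {0..} chiL"
    unfolding continuous_on_eq_continuous_within
  proof
    fix x :: real assume "x \<in> {0..}"
    then have "(D 0 has_real_derivative D (Suc 0) x) (at x within {0..})" using Dd by simp
    then show "continuous (at x within {0..}) chiL" unfolding D0 by (rule DERIV_continuous)
  qed
  have "compact (chiL ` {0..1/3})"
    by (rule compact_continuous_image[OF continuous_on_subset[OF cont]]) auto
  then obtain M0 where M0: "M0 > 0" "\<And>y. y \<in> chiL ` {0..1/3} \<Longrightarrow> norm y \<le> M0"
    using compact_imp_bounded bounded_pos by metis
  define M where "M = M0"
  have M: "\<And>r. 0 \<le> r \<Longrightarrow> r \<le> 1/3 \<Longrightarrow> \<bar>chiL r\<bar> \<le> M" using M0 by (auto simp: M_def)
  have Mpos: "M > 0" using M0 by (simp add: M_def)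
  define n where "n = CARD('n)"
  have DIMn: "DIM(real ^ 'n) = n" by (simp add: n_def)
  define V3 where "V3 = measure lborel (cball (0::real^'n) (1/3))"
  define V1 where "V1 = measure lborel (ball (0::real^'n) 1)"
  have V3: "V3 \<ge> 0" and V1: "V1 \<ge> 0" by (auto simp: V3_def V1_def)
  have S0: "S0 n \<ge> 0" unfolding S0_def by (simp add: divide_nonneg_pos)
  define P where "P = fact (n + l) * 2^(n+l) / (2::real)"
  have P: "P \<ge> 0" by (simp add: P_def)
  define K where "K = (18^l * fact l :: real)"
  have K: "K \<ge> 0" by (simp add: K_def)
  define C where "C = 1 + M * (sqrt (2 * V3) * (real b + P) + sqrt (2 * V1 * S0 n) * K)"
  have Cpos: "C > 0" unfolding C_def using Mpos V3 V1 S0 P K by (simp add: add_pos_nonneg)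
  show ?thesis
  proof (intro exI[of _ C] conjI allI impI Cpos)
    fix t :: real assume t: "t \<ge> 1"
    define m where "m \<xi> = m1 chiL b l \<xi> t" for \<xi> :: "real^'n"
    define X where "X = exp (-t/2)/2 + exp (-t/2) * (real b * t powr (2 * (real b - 1)))"
    define Y where "Y = K * t powr (- real l)"
    have X: "X \<ge> 0" by (simp add: X_def)
    have Y: "Y \<ge> 0" using K by (simp add: Y_def)
    define J where "J = nat \<lceil>sqrt t\<rceil>"
    define G where "G \<xi> = (\<Sum>j<J. exp (- (real j ^ 2) / 2) * indicator (ball 0 ((real j+1)/sqrt t)) \<xi>)" for \<xi> :: "real^'n"
    define Bd where "Bd \<xi> = 2 * M^2 * X^2 * indicator (cball 0 (1/3)) \<xi> + 2 * M^2 * Y^2 * G \<xi>" for \<xi> :: "real^'n"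
    have Gnn: "G \<xi> \<ge> 0" for \<xi> unfolding G_def by (intro sum_nonneg) auto
    have pw: "\<bar>m \<xi>\<bar> \<le> indicator (cball 0 (1/3)) \<xi> * (M * X + M * Y * exp (- t * (norm \<xi>)^2 / 4))" for \<xi>
      unfolding m_def X_def Y_def K_def using m1_pointwise[OF t vanish M] by simp
    have sq: "(m \<xi>)^2 \<le> Bd \<xi>" for \<xi>
    proof (cases "norm \<xi> \<le> 1/3")
      case False
      then have "m \<xi> = 0" using pw[of \<xi>] by simp
      then show ?thesis using Gnn[of \<xi>] by (simp add: Bd_def)
    next
      case True
      define e where "e = exp (- t * (norm \<xi>)^2 / 4)"
      have e2: "e^2 = exp (- t * (norm \<xi>)^2 / 2)" by (simp add: e_def power2_eq_square exp_add[symmetric])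
      have "\<bar>m \<xi>\<bar> \<le> M * X + M * Y * e" using pw[of \<xi>] True by (simp add: e_def)
      then have "(m \<xi>)^2 \<le> (M * X + M * Y * e)^2"
        by (metis abs_ge_zero order.trans power2_abs power_mono)
      also have "\<dots> \<le> 2 * (M * X)^2 + 2 * (M * Y * e)^2"
        by (smt (verit, ccfv_threshold) zero_le_power2 power2_diff power2_sum)
      also have "(M * Y * e)^2 = M^2 * Y^2 * exp (- t * (norm \<xi>)^2 / 2)"
        by (simp add: power_mult_distrib e2)
      also have "exp (- t * (norm \<xi>)^2 / 2) \<le> G \<xi>"
        unfolding G_def J_def by (rule gauss_pointwise[OF t True])
      finally have "(m \<xi>)^2 \<le> 2 * (M * X)^2 + 2 * (M^2 * Y^2 * G \<xi>)"
        by (simp add: mult_left_mono)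
      then show ?thesis using True by (simp add: Bd_def power_mult_distrib mult_ac)
    qed
    have rho: "(real j+1)/sqrt t \<ge> 0" for j using t by simp
    have Gint: "integrable lborel G"
      unfolding G_def[abs_def] by (rule gauss_integral(1)) (rule rho)
    have Gval: "integral\<^sup>L lborel G = (\<Sum>j<J. exp (- (real j ^ 2) / 2) * (((real j+1)/sqrt t) ^ n * V1))"
      unfolding G_def[abs_def] V1_def DIMn[symmetric] by (rule gauss_integral(2)) (rule rho)
    have Gle: "integral\<^sup>L lborel G \<le> V1 * (S0 n * t powr (- real n / 2))"
    proof -
      have "integral\<^sup>L lborel G = V1 * (\<Sum>j<J. exp (- (real j ^ 2) / 2) * ((real j+1)/sqrt t) ^ n)"
        unfolding Gval by (simp add: sum_distrib_left mult_ac)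
      also have "\<dots> \<le> V1 * (S0 n * t powr (- real n / 2))"
        using gauss_sum_bound[OF t, where J=J and d=n] V1 by (intro mult_left_mono) auto
      finally show ?thesis .
    qed
    have Iint: "integrable lborel (\<lambda>\<xi>::real^'n. indicator (cball 0 (1/3)) \<xi> :: real)"
      by (intro integrable_real_indicator emeasure_bounded_finite) auto
    have Bint: "integrable lborel Bd"
      unfolding Bd_def[abs_def] using Iint Gint by auto
    have mm: "(\<lambda>\<xi>. (m \<xi>)^2) \<in> borel_measurable lborel"
    proof -
      have "m \<in> borel_measurable borel" unfolding m_def[abs_def] by (rule m1_meas[OF cont vanish])
      then show ?thesis by measurable
    qed
    have mint: "integrable lborel (\<lambda>\<xi>. (m \<xi>)^2)"
    proof (rule Bochner_Integration.integrable_bound[OF Bint mm])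
      show "AE x in lborel. norm ((m x)^2) \<le> norm (Bd x)"
      proof (rule AE_I2)
        fix x
        have "0 \<le> (m x)^2" by simp
        then show "norm ((m x)^2) \<le> norm (Bd x)" using sq[of x] by simp
      qed
    qed
    have "integral\<^sup>L lborel (\<lambda>\<xi>. (m \<xi>)^2) \<le> integral\<^sup>L lborel Bd"
      by (rule integral_mono[OF mint Bint sq])
    also have "integral\<^sup>L lborel Bd = 2 * M^2 * X^2 * V3 + 2 * M^2 * Y^2 * integral\<^sup>L lborel G"
      unfolding Bd_def[abs_def] using Iint Gint by (simp add: V3_def)
    also have "\<dots> \<le> 2 * M^2 * X^2 * V3 + 2 * M^2 * Y^2 * (V1 * (S0 n * t powr (- real n / 2)))"
      using Gle by (intro add_left_mono mult_left_mono) auto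
    finally have Ile: "integral\<^sup>L lborel (\<lambda>\<xi>. (m \<xi>)^2) \<le> (M * X)^2 * (2 * V3) + (M * Y)^2 * (2 * V1 * S0 n * t powr (- real n / 2))"
      by (simp add: power_mult_distrib mult_ac)
    have "sqrt (integral\<^sup>L lborel (\<lambda>\<xi>. (m \<xi>)^2)) \<le> sqrt ((M * X)^2 * (2 * V3) + (M * Y)^2 * (2 * V1 * S0 n * t powr (- real n / 2)))"
      using Ile by simp
    also have "\<dots> \<le> sqrt ((M * X)^2 * (2 * V3)) + sqrt ((M * Y)^2 * (2 * V1 * S0 n * t powr (- real n / 2)))"
      by (rule sqrt_add_le_add_sqrt) (use V3 V1 S0 in auto)
    also have "sqrt ((M * X)^2 * (2 * V3)) = M * X * sqrt (2 * V3)"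
      using Mpos X by (simp add: real_sqrt_mult)
    also have "sqrt ((M * Y)^2 * (2 * V1 * S0 n * t powr (- real n / 2))) = M * Y * sqrt (2 * V1 * S0 n) * t powr (- real n / 4)"
    proof -
      have "sqrt (t powr (- real n / 2)) = t powr (- real n / 4)"
        using t powr_half_sqrt_powr[of t "- real n / 2"] by simp
      then show ?thesis using Mpos Y by (simp add: real_sqrt_mult)
    qed
    finally have main: "sqrt (integral\<^sup>L lborel (\<lambda>\<xi>. (m \<xi>)^2)) \<le> M * X * sqrt (2 * V3) + M * Y * sqrt (2 * V1 * S0 n) * t powr (- real n / 4)" .
    define A where "A = t powr (2 * (real b - 1)) * exp (- t / 2)"
    define Bt where "Bt = t powr (- real n / 4 - real l)"
    have A: "A \<ge> 0" and Bt: "Bt \<ge> 0" by (auto simp: A_def Bt_def)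
    have Xb: "X \<le> P * Bt + real b * A"
      unfolding X_def P_def Bt_def A_def using exp_half_bound[OF t, of n l] by (simp add: mult_ac)
    have Yb: "Y * t powr (- real n / 4) = K * Bt"
    proof -
      have "t powr (- real l) * t powr (- real n / 4) = t powr (- real l + - real n / 4)"
        by (rule powr_add[symmetric])
      also have "- real l + - real n / 4 = - real n / 4 - real l" by simp
      finally show ?thesis unfolding Y_def Bt_def by (simp add: mult.assoc)
    qed
    have "M * X * sqrt (2 * V3) + M * Y * sqrt (2 * V1 * S0 n) * t powr (- real n / 4)
        \<le> M * (P * Bt + real b * A) * sqrt (2 * V3) + M * (K * Bt) * sqrt (2 * V1 * S0 n)"
    proof -
      have "M * X * sqrt (2 * V3) \<le> M * (P * Bt + real b * A) * sqrt (2 * V3)"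
        using Xb Mpos V3 by (intro mult_right_mono mult_left_mono) auto
      moreover have "M * Y * sqrt (2 * V1 * S0 n) * t powr (- real n / 4) = M * (K * Bt) * sqrt (2 * V1 * S0 n)"
        using Yb by (simp add: mult_ac)
      ultimately show ?thesis by linarith
    qed
    also have "\<dots> \<le> C * A + C * Bt"
    proof -
      have c1: "M * sqrt (2 * V3) * real b \<le> C" and c2: "M * (sqrt (2 * V3) * P + sqrt (2 * V1 * S0 n) * K) \<le> C"
        unfolding C_def using Mpos V3 V1 S0 P K by (simp_all add: algebra_simps)
      have "M * (P * Bt + real b * A) * sqrt (2 * V3) + M * (K * Bt) * sqrt (2 * V1 * S0 n)
          = (M * sqrt (2 * V3) * real b) * A + (M * (sqrt (2 * V3) * P + sqrt (2 * V1 * S0 n) * K)) * Bt"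
        by (simp add: algebra_simps)
      also have "\<dots> \<le> C * A + C * Bt"
        using c1 c2 A Bt by (intro add_mono mult_right_mono) auto
      finally show ?thesis .
    qed
    finally have fin: "sqrt (integral\<^sup>L lborel (\<lambda>\<xi>. (m \<xi>)^2)) \<le> C * A + C * Bt" using main by linarith
    show "integrable lborel (\<lambda>xi :: real ^ 'n. (m1 chiL b l xi t)^2)"
      using mint unfolding m_def .
    show "sqrt (integral\<^sup>L lborel (\<lambda>xi :: real ^ 'n. (m1 chiL b l xi t)^2))
             \<le> C * t powr (2 * (real b - 1)) * exp (- t / 2)
               + C * t powr (- real CARD('n) / 4 - real l)"
      using fin unfolding m_def A_def Bt_def n_def by (simp add: mult_ac)
  qed
qed


end
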